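(* Let $f:\mathcal{O}\to\mathcal{F}$ be a scaling map with scaling ratio $q^\lambda$, $\lambda\ge0$, and let $\tilde f:\mathcal{O}\to\mathcal{O}$, $\tilde f(x)=[f(x)]$. Then the normalized Haar measure $\mu$ on $\mathcal{O}$ is $\tilde f$-invariant, i.e. $\mu(\tilde f^{-1}(B))=\mu(B)$ for every Borel set $B\subset\mathcal{O}$.
   Context: $\mathcal{F}$ is a non-Archimedean local field with valuation ring $\mathcal{O}$, maximal ideal $\mathfrak{p}$, $q=\#\mathcal{O}/\mathfrak{p}$, normalized absolute value $|\cdot|_\mathfrak{p}$, prime element $\pi$. Fix representatives $C\subset\mathcal{O}$ of $\mathcal{O}/\mathfrak{p}$ with $0\in C$; writing $x=\sum_{n\ge v}c_n\pi^n$ ($c_n\in C$), $[x]=\sum_{n\ge0}c_n\pi^n$. A map $f:\Omega\to\mathcal{F}$ is scaling with ratio $q^\lambda$ if $|f(x)-f(y)|_\mathfrak{p}=q^\lambda|x-y|_\mathfrak{p}$ for all $x,y\in\Omega$. $\mu$ denotes Haar measure with $\mu(\mathcal{O})=1$. *)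

theory Defs
  imports "HOL-Analysis.Analysis"
begin

text \<open>A non-Archimedean local field is modelled by a field type 'a together with a
normalized absolute value absv, a prime element, the residue field size q and a fixed
set C of representatives of O/p containing 0.\<close>

definition valring :: "('a::field \<Rightarrow> real) \<Rightarrow> 'a set" where
  "valring absv = {x. absv x \<le> 1}"

definition converges_to :: "('a::field \<Rightarrow> real) \<Rightarrow> (nat \<Rightarrow> 'a) \<Rightarrow> 'a \<Rightarrow> bool" where
  "converges_to absv s l \<longleftrightarrow> (\<forall>e>0. \<exists>N. \<forall>n\<ge>N. absv (s n - l) < e)"

definition nonarch_local_field ::
  "('a::field \<Rightarrow> real) \<Rightarrow> 'a \<Rightarrow> nat \<Rightarrow> 'a set \<Rightarrow> bool" where
  "nonarch_local_field absv \<pi> q C \<longleftrightarrow>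
     (\<forall>x. absv x \<ge> 0) \<and> (\<forall>x. absv x = 0 \<longleftrightarrow> x = 0) \<and>
     (\<forall>x y. absv (x * y) = absv x * absv y) \<and>
     (\<forall>x y. absv (x + y) \<le> max (absv x) (absv y)) \<and>
     q \<ge> 2 \<and> absv \<pi> = 1 / real q \<and>
     (\<forall>x. x \<noteq> 0 \<longrightarrow> (\<exists>n::int. absv x = real q powr real_of_int n)) \<and>
     finite C \<and> card C = q \<and> 0 \<in> C \<and> C \<subseteq> valring absv \<and>
     (\<forall>x\<in>valring absv. \<exists>!c. c \<in> C \<and> absv (x - c) < 1) \<and>
     (\<forall>s::nat \<Rightarrow> 'a. (\<forall>e>0. \<exists>N. \<forall>m\<ge>N. \<forall>n\<ge>N. absv (s m - s n) < e)
         \<longrightarrow> (\<exists>l. converges_to absv s l))"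

definition ipow :: "'a::field \<Rightarrow> int \<Rightarrow> 'a" where
  "ipow \<pi> n = (if n \<ge> 0 then \<pi> ^ nat n else inverse \<pi> ^ nat (- n))"

definition pi_expansion :: "('a::field \<Rightarrow> real) \<Rightarrow> 'a \<Rightarrow> 'a set \<Rightarrow> 'a \<Rightarrow> (int \<Rightarrow> 'a) \<Rightarrow> bool" where
  "pi_expansion absv \<pi> C x c \<longleftrightarrow>
     (\<forall>n. c n \<in> C) \<and> (\<exists>v. \<forall>n<v. c n = 0) \<and>
     converges_to absv (\<lambda>N. \<Sum>n\<in>{- int N..int N}. c n * ipow \<pi> n) x"

definition bracket :: "('a::field \<Rightarrow> real) \<Rightarrow> 'a \<Rightarrow> 'a set \<Rightarrow> 'a \<Rightarrow> 'a" where
  "bracket absv \<pi> C x = (THE y. \<exists>c. pi_expansion absv \<pi> C x c \<and>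
       converges_to absv (\<lambda>N. \<Sum>n\<le>N. c (int n) * \<pi> ^ n) y)"

definition absv_open :: "('a::field \<Rightarrow> real) \<Rightarrow> 'a set \<Rightarrow> bool" where
  "absv_open absv U \<longleftrightarrow> (\<forall>x\<in>U. \<exists>r>0. {y. absv (y - x) < r} \<subseteq> U)"

definition borel_O :: "('a::field \<Rightarrow> real) \<Rightarrow> 'a set set" where
  "borel_O absv = sigma_sets (valring absv) {U \<inter> valring absv | U. absv_open absv U}"

definition normalized_haar :: "('a::field \<Rightarrow> real) \<Rightarrow> 'a measure \<Rightarrow> bool" where
  "normalized_haar absv M \<longleftrightarrow>
     space M = valring absv \<and> sets M = borel_O absv \<and> emeasure M (valring absv) = 1 \<and>
     (\<forall>a\<in>valring absv. \<forall>B\<in>sets M. emeasure M ((\<lambda>x. x + a) ` B) = emeasure M B)"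

definition scaling_map :: "('a::field \<Rightarrow> real) \<Rightarrow> nat \<Rightarrow> real \<Rightarrow> 'a set \<Rightarrow> ('a \<Rightarrow> 'a) \<Rightarrow> bool" where
  "scaling_map absv q lam \<Omega> f \<longleftrightarrow>
     (\<forall>x\<in>\<Omega>. \<forall>y\<in>\<Omega>. absv (f x - f y) = real q powr lam * absv (x - y))"

end

theory Submission
  imports Defs
begin


locale nalf =
  fixes absv :: "'a::field \<Rightarrow> real" and \<pi> :: 'a and q :: nat and C :: "'a set"
  assumes nalf: "nonarch_local_field absv \<pi> q C"
begin

abbreviation "Ov \<equiv> valring absv"

lemma H: "(\<forall>x. absv x \<ge> 0) \<and> (\<forall>x. absv x = 0 \<longleftrightarrow> x = 0) \<and>
     (\<forall>x y. absv (x * y) = absv x * absv y) \<and>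
     (\<forall>x y. absv (x + y) \<le> max (absv x) (absv y)) \<and>
     q \<ge> 2 \<and> absv \<pi> = 1 / real q \<and>
     (\<forall>x. x \<noteq> 0 \<longrightarrow> (\<exists>n::int. absv x = real q powr real_of_int n)) \<and>
     finite C \<and> card C = q \<and> 0 \<in> C \<and> C \<subseteq> valring absv \<and>
     (\<forall>x\<in>valring absv. \<exists>!c. c \<in> C \<and> absv (x - c) < 1) \<and>
     (\<forall>s::nat \<Rightarrow> 'a. (\<forall>e>0. \<exists>N. \<forall>m\<ge>N. \<forall>n\<ge>N. absv (s m - s n) < e)
         \<longrightarrow> (\<exists>l. converges_to absv s l))"
  using nalf unfolding nonarch_local_field_def .

lemma nonneg[simp]: "absv x \<ge> 0" using H[THEN conjunct1] by blast
lemma zero_iff[simp]: "absv x = 0 \<longleftrightarrow> x = 0" using H[THEN conjunct2, THEN conjunct1] by blast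
lemma amult[simp]: "absv (x * y) = absv x * absv y" using H[THEN conjunct2, THEN conjunct2, THEN conjunct1] by blast
lemma ultra: "absv (x + y) \<le> max (absv x) (absv y)" using H[THEN conjunct2, THEN conjunct2, THEN conjunct2, THEN conjunct1] by blast
lemma q2: "q \<ge> 2" using H[THEN conjunct2, THEN conjunct2, THEN conjunct2, THEN conjunct2, THEN conjunct1] by blast
lemma absv_pi[simp]: "absv \<pi> = 1 / real q" using H[THEN conjunct2, THEN conjunct2, THEN conjunct2, THEN conjunct2, THEN conjunct2, THEN conjunct1] by blast
lemma valgrp: "x \<noteq> 0 \<Longrightarrow> \<exists>n::int. absv x = real q powr real_of_int n"
  using H[THEN conjunct2, THEN conjunct2, THEN conjunct2, THEN conjunct2, THEN conjunct2, THEN conjunct2, THEN conjunct1] by blast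
lemma finC: "finite C" using H[THEN conjunct2, THEN conjunct2, THEN conjunct2, THEN conjunct2, THEN conjunct2, THEN conjunct2, THEN conjunct2, THEN conjunct1] by blast
lemma cardC: "card C = q" using H[THEN conjunct2, THEN conjunct2, THEN conjunct2, THEN conjunct2, THEN conjunct2, THEN conjunct2, THEN conjunct2, THEN conjunct2, THEN conjunct1] by blast
lemma zeroC: "0 \<in> C" using H[THEN conjunct2, THEN conjunct2, THEN conjunct2, THEN conjunct2, THEN conjunct2, THEN conjunct2, THEN conjunct2, THEN conjunct2, THEN conjunct2, THEN conjunct1] by blast
lemma C_O: "C \<subseteq> Ov" using H[THEN conjunct2, THEN conjunct2, THEN conjunct2, THEN conjunct2, THEN conjunct2, THEN conjunct2, THEN conjunct2, THEN conjunct2, THEN conjunct2, THEN conjunct2, THEN conjunct1] by blast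
lemma C_rep: "x \<in> Ov \<Longrightarrow> \<exists>!c. c \<in> C \<and> absv (x - c) < 1"
  using H[THEN conjunct2, THEN conjunct2, THEN conjunct2, THEN conjunct2, THEN conjunct2, THEN conjunct2, THEN conjunct2, THEN conjunct2, THEN conjunct2, THEN conjunct2, THEN conjunct2, THEN conjunct1] by blast
lemma complete: "(\<forall>e>0. \<exists>N. \<forall>m\<ge>N. \<forall>n\<ge>N. absv (s m - s n) < e) \<Longrightarrow> \<exists>l. converges_to absv s l"
  using H[THEN conjunct2, THEN conjunct2, THEN conjunct2, THEN conjunct2, THEN conjunct2, THEN conjunct2, THEN conjunct2, THEN conjunct2, THEN conjunct2, THEN conjunct2, THEN conjunct2, THEN conjunct2] by blast

lemma O_iff: "x \<in> Ov \<longleftrightarrow> absv x \<le> 1" by (simp add: valring_def)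

lemma qpos: "real q > 0" using q2 by simp
lemma q1: "real q > 1" using q2 by simp
lemma iq_pos: "1 / real q > 0" using q2 by simp
lemma iq_less1: "1 / real q < 1" using q2 by simp

lemma pi_nz[simp]: "\<pi> \<noteq> 0"
proof
  assume "\<pi> = 0" then have "absv \<pi> = 0" by simp
  with absv_pi qpos show False by simp
qed

lemma absv_one[simp]: "absv 1 = 1"
proof -
  have "absv 1 = absv 1 * absv 1" using amult[of 1 1] by simp
  moreover have "absv 1 \<noteq> 0" by simp
  ultimately show ?thesis by (metis mult_cancel_right1)
qed

lemma absv_m1[simp]: "absv (-1) = 1"
proof -
  have "absv (-1) * absv (-1) = 1" using amult[of "-1" "-1"] by simp
  then have "absv (-1) ^ 2 = 1 ^ 2" by (simp add: power2_eq_square)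
  then show ?thesis using nonneg[of "-1"] by (simp add: power2_eq_1_iff)
qed

lemma absv_neg[simp]: "absv (- x) = absv x"
  using amult[of "-1" x] by simp

lemma absv_commute: "absv (x - y) = absv (y - x)"
  by (metis absv_neg minus_diff_eq)

lemma absv_power[simp]: "absv (x ^ n) = absv x ^ n"
  by (induction n) auto

lemma absv0[simp]: "absv 0 = 0" using zero_iff by blast

lemma absv_inverse[simp]: "absv (inverse x) = inverse (absv x)"
proof (cases "x = 0")
  case True then show ?thesis by simp
next
  case False
  have "absv x * absv (inverse x) = 1" using amult[of x "inverse x"] False by simp
  then show ?thesis by (metis inverse_unique)
qed

lemma absv_divide[simp]: "absv (x / y) = absv x / absv y"
  by (simp add: divide_inverse)


lemma ultra_diff: "absv (x - z) \<le> max (absv (x - y)) (absv (y - z))"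
  using ultra[of "x - y" "y - z"] by simp

lemma ultra_le: "absv x \<le> r \<Longrightarrow> absv y \<le> r \<Longrightarrow> absv (x + y) \<le> r"
  using ultra[of x y] by simp

lemma ultra_le_diff: "absv x \<le> r \<Longrightarrow> absv y \<le> r \<Longrightarrow> absv (x - y) \<le> r"
  using ultra_le[of x r "-y"] by simp

lemma strict: assumes "absv b < absv a" shows "absv (a + b) = absv a"
proof -
  have 1: "absv (a + b) \<le> absv a" using ultra[of a b] assms by simp
  have "absv a \<le> max (absv (a + b)) (absv (-b))" using ultra[of "a + b" "-b"] by simp
  then have "absv a \<le> absv (a + b)" using assms by (simp add: max_def split: if_splits)
  with 1 show ?thesis by simp
qed

lemma discrete: assumes "absv x < (1 / real q) ^ k" shows "absv x \<le> (1 / real q) ^ Suc k"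
proof (cases "x = 0")
  case True then show ?thesis by simp
next
  case False
  then obtain n :: int where n: "absv x = real q powr n" using valgrp by blast
  have e: "(1 / real q) ^ j = real q powr (- real j)" for j
    using qpos by (simp add: powr_minus powr_realpow divide_inverse power_inverse)
  have "real q powr n < real q powr (- real k)" using assms n e by simp
  then have "real_of_int n < - real k" using q1 by simp
  then have "n < - int k" by linarith
  then have "n \<le> - int (Suc k)" by simp
  then have "real_of_int n \<le> real_of_int (- int (Suc k))" by (simp only: of_int_le_iff)
  then have "real_of_int n \<le> - real (Suc k)" by simp
  then have X: "real q powr n \<le> real q powr (- real (Suc k))" using q1 by simp
  show ?thesis using n X e[of "Suc k"] by linarith
qed

lemma discrete1: "absv x < 1 \<Longrightarrow> absv x \<le> 1 / real q"
  using discrete[of x 0] by simp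

lemma O_add: "x \<in> Ov \<Longrightarrow> y \<in> Ov \<Longrightarrow> x + y \<in> Ov"
  using ultra_le O_iff by blast
lemma O_diff: "x \<in> Ov \<Longrightarrow> y \<in> Ov \<Longrightarrow> x - y \<in> Ov"
  using ultra_le_diff O_iff by blast
lemma O_mult: "x \<in> Ov \<Longrightarrow> y \<in> Ov \<Longrightarrow> x * y \<in> Ov"
  by (simp add: O_iff mult_le_one)
lemma O_pi: "\<pi> ^ n \<in> Ov"
  using iq_less1 by (simp add: O_iff power_le_one)
lemma O_0: "0 \<in> Ov" by (simp add: O_iff)

lemma C_dist: assumes "c \<in> C" "c' \<in> C" "c \<noteq> c'" shows "absv (c - c') = 1"
proof -
  have "c \<in> Ov" "c' \<in> Ov" using assms C_O by auto
  then have le: "absv (c - c') \<le> 1" using O_diff O_iff by blast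
  have "\<not> absv (c' - c) < 1"
  proof
    assume "absv (c' - c) < 1"
    moreover have "absv (c' - c') < 1" by simp
    ultimately show False using C_rep[OF \<open>c' \<in> Ov\<close>] assms by blast
  qed
  then show ?thesis using le absv_commute[of c c'] by simp
qed

lemma sum_bound: assumes "finite S" "\<And>i. i \<in> S \<Longrightarrow> absv (g i) \<le> r" "r \<ge> 0"
  shows "absv (sum g S) \<le> r"
  using assms by (induction S rule: finite_induct) (auto intro: ultra_le)

lemma pow_anti: "m \<le> n \<Longrightarrow> (1 / real q) ^ n \<le> (1 / real q) ^ m"
  using iq_pos iq_less1 by (simp add: power_decreasing)

lemma small_pow: "e > 0 \<Longrightarrow> \<exists>N. (1 / real q) ^ N < e"
  using real_arch_pow_inv[of e "1 / real q"] iq_less1 by blast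

lemma conv_unique: assumes "converges_to absv s l" "converges_to absv s l'" shows "l = l'"
proof -
  have "absv (l - l') < e" if "e > 0" for e
  proof -
    obtain N1 where N1: "\<forall>n\<ge>N1. absv (s n - l) < e" using assms(1) \<open>e>0\<close> unfolding converges_to_def by blast
    obtain N2 where N2: "\<forall>n\<ge>N2. absv (s n - l') < e" using assms(2) \<open>e>0\<close> unfolding converges_to_def by blast
    let ?n = "max N1 N2"
    have "absv (l - l') \<le> max (absv (l - s ?n)) (absv (s ?n - l'))" by (rule ultra_diff)
    moreover have "absv (l - s ?n) < e" using N1 absv_commute by (metis max.cobounded1)
    moreover have "absv (s ?n - l') < e" using N2 by simp
    ultimately show ?thesis by simp
  qed
  then have "\<not> absv (l - l') > 0" by (meson less_irrefl)
  then show ?thesis using nonneg[of "l - l'"] by simp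
qed

lemma conv_cong: assumes "converges_to absv s l" "\<forall>n\<ge>Nz. s n = t n" shows "converges_to absv t l"
  unfolding converges_to_def
proof (intro allI impI)
  fix e :: real assume "e > 0"
  then obtain N where "\<forall>n\<ge>N. absv (s n - l) < e" using assms(1) unfolding converges_to_def by blast
  then show "\<exists>N. \<forall>n\<ge>N. absv (t n - l) < e" using assms(2) by (intro exI[of _ "max N Nz"]) auto
qed

lemma conv_add: "converges_to absv s l \<Longrightarrow> converges_to absv (\<lambda>n. a + s n) (a + l)"
  unfolding converges_to_def by simp

lemma conv_mult: assumes "converges_to absv s l" shows "converges_to absv (\<lambda>n. a * s n) (a * l)"
proof (cases "a = 0")
  case True then show ?thesis by (simp add: converges_to_def)
next
  case False
  then have ap: "absv a > 0" using nonneg[of a] zero_iff[of a] by linarith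
  show ?thesis unfolding converges_to_def
  proof (intro allI impI)
    fix e :: real assume "e > 0"
    then have "e / absv a > 0" using ap by simp
    then obtain N where N: "\<forall>n\<ge>N. absv (s n - l) < e / absv a" using assms unfolding converges_to_def by blast
    have "absv (a * s n - a * l) < e" if "n \<ge> N" for n
    proof -
      have "absv (a * s n - a * l) = absv a * absv (s n - l)" by (simp add: right_diff_distrib[symmetric])
      also have "\<dots> < absv a * (e / absv a)" using N that ap by (intro mult_strict_left_mono) auto
      also have "\<dots> = e" using False by simp
      finally show ?thesis .
    qed
    then show "\<exists>N. \<forall>n\<ge>N. absv (a * s n - a * l) < e" by blast
  qed
qed

lemma conv_shift: assumes "converges_to absv s l" shows "converges_to absv (\<lambda>n. s (n + k)) l"
  unfolding converges_to_def
proof (intro allI impI)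
  fix e :: real assume "e > 0"
  then obtain N where N: "\<forall>n\<ge>N. absv (s n - l) < e" using assms unfolding converges_to_def by blast
  have "absv (s (n + k) - l) < e" if "n \<ge> N" for n using N that by simp
  then show "\<exists>N. \<forall>n\<ge>N. absv (s (n + k) - l) < e" by blast
qed

lemma conv_geom: assumes "\<And>n. absv (s n - l) \<le> (1 / real q) ^ n" shows "converges_to absv s l"
  unfolding converges_to_def
proof (intro allI impI)
  fix e :: real assume "e > 0"
  then obtain N where N: "(1 / real q) ^ N < e" using small_pow by blast
  have "absv (s n - l) < e" if "n \<ge> N" for n
    using assms[of n] pow_anti[OF that] N by linarith
  then show "\<exists>N. \<forall>n\<ge>N. absv (s n - l) < e" by blast
qed

end


context nalf
begin

definition dig :: "'a \<Rightarrow> 'a" where "dig z = (SOME c. c \<in> C \<and> absv (z - c) < 1)"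

lemma dig: assumes "z \<in> Ov" shows "dig z \<in> C" "absv (z - dig z) < 1"
proof -
  have "\<exists>c. c \<in> C \<and> absv (z - c) < 1" using C_rep[OF assms] by blast
  then have "dig z \<in> C \<and> absv (z - dig z) < 1" unfolding dig_def by (rule someI_ex)
  then show "dig z \<in> C" "absv (z - dig z) < 1" by auto
qed

primrec rr :: "'a \<Rightarrow> nat \<Rightarrow> 'a" where
  "rr x 0 = x"
| "rr x (Suc n) = (rr x n - dig (rr x n)) / \<pi>"

declare rr.simps(2)[simp del]

lemma rr_O: assumes "x \<in> Ov" shows "rr x n \<in> Ov"
proof (induction n)
  case 0 then show ?case using assms by simp
next
  case (Suc n)
  have "absv (rr x n - dig (rr x n)) \<le> 1 / real q" using dig(2)[OF Suc] discrete1 by blast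
  then have "absv (rr x n - dig (rr x n)) / (1 / real q) \<le> 1" using qpos by (simp add: field_simps)
  then show ?case by (simp add: O_iff rr.simps(2))
qed

lemma rr_eq: "x = (\<Sum>i<N. dig (rr x i) * \<pi> ^ i) + \<pi> ^ N * rr x N"
proof (induction N)
  case 0 then show ?case by simp
next
  case (Suc N)
  have gen: "\<And>r d r'. r = d + \<pi> * r' \<Longrightarrow> \<pi> ^ N * r = \<pi> ^ N * d + \<pi> ^ Suc N * r'"
    by (simp add: algebra_simps)
  have "rr x N = dig (rr x N) + \<pi> * rr x (Suc N)" by (simp add: rr.simps(2))
  then have e: "\<pi> ^ N * rr x N = \<pi> ^ N * dig (rr x N) + \<pi> ^ Suc N * rr x (Suc N)"
    by (rule gen)
  have "x = (\<Sum>i<N. dig (rr x i) * \<pi> ^ i) + \<pi> ^ N * rr x N" by (rule Suc.IH)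
  also have "\<dots> = (\<Sum>i<N. dig (rr x i) * \<pi> ^ i) + (\<pi> ^ N * dig (rr x N) + \<pi> ^ Suc N * rr x (Suc N))"
    by (simp only: e)
  also have "\<dots> = (\<Sum>i<Suc N. dig (rr x i) * \<pi> ^ i) + \<pi> ^ Suc N * rr x (Suc N)"
    by (simp add: algebra_simps)
  finally show ?case .
qed

lemma rr_approx: assumes "x \<in> Ov" shows "absv (x - (\<Sum>i<N. dig (rr x i) * \<pi> ^ i)) \<le> (1 / real q) ^ N"
proof -
  have "x - (\<Sum>i<N. dig (rr x i) * \<pi> ^ i) = \<pi> ^ N * rr x N" using rr_eq[of x N] by (simp add: algebra_simps)
  moreover have "absv (rr x N) \<le> 1" using rr_O[OF assms] O_iff by blast
  ultimately show ?thesis using iq_pos by (simp add: mult_left_le)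
qed

lemma ipow_nat[simp]: "ipow \<pi> (int n) = \<pi> ^ n" by (simp add: ipow_def)

lemma ipow_diff: "ipow \<pi> (int i - int j) = inverse (\<pi> ^ j) * \<pi> ^ i"
proof (cases "j \<le> i")
  case True
  then have "ipow \<pi> (int i - int j) = \<pi> ^ (i - j)" by (simp add: ipow_def nat_diff_distrib)
  moreover have "\<pi> ^ i = \<pi> ^ (i - j) * \<pi> ^ j" using True by (simp add: power_add[symmetric])
  ultimately show ?thesis by simp
next
  case False
  then have "ipow \<pi> (int i - int j) = inverse \<pi> ^ (j - i)" by (simp add: ipow_def nat_diff_distrib)
  moreover have "\<pi> ^ j = \<pi> ^ (j - i) * \<pi> ^ i" using False by (simp add: power_add[symmetric])
  ultimately show ?thesis by (simp add: power_inverse)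
qed

lemma absv_ipow_neg: "n < 0 \<Longrightarrow> absv (ipow \<pi> n) = real q ^ nat (- n)"
  by (simp add: ipow_def power_inverse power_one_over)

lemma geom_limit: assumes "\<And>i. absv (t i) \<le> (1 / real q) ^ i"
  shows "\<exists>l. converges_to absv (\<lambda>N. \<Sum>i\<le>N. t i) l"
proof (rule complete)
  let ?S = "\<lambda>N. \<Sum>i\<le>N. t i"
  have step: "absv (?S (n + k) - ?S n) \<le> (1 / real q) ^ Suc n" for n k
  proof (induction k)
    case 0 then show ?case using iq_pos by simp
  next
    case (Suc k)
    have "?S (n + Suc k) - ?S n = (?S (n + k) - ?S n) + t (Suc (n + k))" by simp
    moreover have "absv (t (Suc (n + k))) \<le> (1 / real q) ^ Suc n"
      using assms[of "Suc (n + k)"] pow_anti[of "Suc n" "Suc (n + k)"] by simp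
    ultimately show ?case using Suc ultra_le by metis
  qed
  show "\<forall>e>0. \<exists>N. \<forall>m\<ge>N. \<forall>n\<ge>N. absv (?S m - ?S n) < e"
  proof (intro allI impI)
    fix e :: real assume "e > 0"
    then obtain N where N: "(1 / real q) ^ N < e" using small_pow by blast
    have "absv (?S m - ?S n) < e" if "m \<ge> N" "n \<ge> N" for m n
    proof (cases "n \<le> m")
      case True
      then obtain k where "m = n + k" using le_Suc_ex by blast
      then have "absv (?S m - ?S n) \<le> (1 / real q) ^ Suc n" using step by simp
      also have "\<dots> \<le> (1 / real q) ^ N" by (rule pow_anti) (use that in simp)
      finally show ?thesis using N by simp
    next
      case False
      then obtain k where "n = m + k" using le_Suc_ex[of m n] by force
      then have "absv (?S n - ?S m) \<le> (1 / real q) ^ Suc m" using step by simp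
      also have "\<dots> \<le> (1 / real q) ^ N" by (rule pow_anti) (use that in simp)
      finally show ?thesis using N absv_commute by simp
    qed
    then show "\<exists>N. \<forall>m\<ge>N. \<forall>n\<ge>N. absv (?S m - ?S n) < e" by blast
  qed
qed

definition Qb :: "'a \<Rightarrow> 'a \<Rightarrow> bool" where
  "Qb y z \<longleftrightarrow> (\<exists>c. pi_expansion absv \<pi> C y c \<and> converges_to absv (\<lambda>N. \<Sum>n\<le>N. c (int n) * \<pi> ^ n) z)"

lemma exists_j: "\<exists>j::nat. absv (\<pi> ^ j * y) \<le> 1"
proof (cases "y = 0")
  case True then show ?thesis by simp
next
  case False
  then obtain n :: int where n: "absv y = real q powr n" using valgrp by blast
  let ?j = "nat n"
  have "absv (\<pi> ^ ?j * y) = (1 / real q) ^ ?j * real q powr n" using n by simp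
  also have "\<dots> = real q powr (- real ?j) * real q powr n"
    using qpos by (simp add: powr_minus powr_realpow divide_inverse power_inverse)
  also have "\<dots> = real q powr (real_of_int n - real ?j)" by (simp add: powr_add[symmetric])
  also have "\<dots> \<le> real q powr 0" using q1 by (intro powr_mono) auto
  finally have "absv (\<pi> ^ ?j * y) \<le> 1" using qpos by simp
  then show ?thesis by blast
qed

lemma expansion_exists: "\<exists>z. Qb y z"
proof -
  obtain j :: nat where j: "absv (\<pi> ^ j * y) \<le> 1" using exists_j by blast
  define x where "x = \<pi> ^ j * y"
  have xO: "x \<in> Ov" using j O_iff x_def by simp
  define d where "d i = dig (rr x i)" for i
  have dC: "d i \<in> C" for i using dig(1)[OF rr_O[OF xO]] d_def by simp
  define c where "c n = (if - int j \<le> n then d (nat (n + int j)) else 0)" for n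
  have cC: "c n \<in> C" for n using dC zeroC c_def by simp
  have c0: "\<forall>n < - int j. c n = 0" using c_def by simp
  have conv_x: "converges_to absv (\<lambda>N. \<Sum>i<N. d i * \<pi> ^ i) x"
    by (rule conv_geom) (use rr_approx[OF xO] absv_commute d_def in auto)
  have sym: "(\<Sum>n\<in>{- int N..int N}. c n * ipow \<pi> n) = inverse (\<pi> ^ j) * (\<Sum>i<N + (j + 1). d i * \<pi> ^ i)"
    if "N \<ge> j" for N
  proof -
    have "(\<Sum>n\<in>{- int N..int N}. c n * ipow \<pi> n) = (\<Sum>n\<in>{- int j..int N}. c n * ipow \<pi> n)"
      using that c0 by (intro sum.mono_neutral_right) auto
    also have "{- int j..int N} = (\<lambda>i. int i - int j) ` {..<N + (j + 1)}"
    proof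
      show "{- int j..int N} \<subseteq> (\<lambda>i. int i - int j) ` {..<N + (j + 1)}"
      proof
        fix n assume "n \<in> {- int j..int N}"
        then have "n = int (nat (n + int j)) - int j" "nat (n + int j) < N + (j + 1)" by auto
        then show "n \<in> (\<lambda>i. int i - int j) ` {..<N + (j + 1)}" by blast
      qed
    qed auto
    also have "(\<Sum>n\<in>(\<lambda>i. int i - int j) ` {..<N + (j + 1)}. c n * ipow \<pi> n)
        = (\<Sum>i<N + (j + 1). c (int i - int j) * ipow \<pi> (int i - int j))"
      by (rule sum.reindex_cong[where l="\<lambda>i. int i - int j"]) (auto simp: inj_on_def)
    also have "\<dots> = (\<Sum>i<N + (j + 1). inverse (\<pi> ^ j) * (d i * \<pi> ^ i))"
      by (intro sum.cong refl) (simp add: c_def ipow_diff)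
    also have "\<dots> = inverse (\<pi> ^ j) * (\<Sum>i<N + (j + 1). d i * \<pi> ^ i)"
      by (simp only: sum_distrib_left)
    finally show ?thesis .
  qed
  have "converges_to absv (\<lambda>N. inverse (\<pi> ^ j) * (\<Sum>i<N + (j + 1). d i * \<pi> ^ i)) (inverse (\<pi> ^ j) * x)"
    by (rule conv_mult, rule conv_shift[OF conv_x])
  moreover have "inverse (\<pi> ^ j) * x = y" using x_def by simp
  ultimately have cs: "converges_to absv (\<lambda>N. inverse (\<pi> ^ j) * (\<Sum>i<N + (j + 1). d i * \<pi> ^ i)) y"
    by simp
  have conv_sym: "converges_to absv (\<lambda>N. \<Sum>n\<in>{- int N..int N}. c n * ipow \<pi> n) y"
  proof (rule conv_cong[OF cs, of j])
    show "\<forall>n\<ge>j. inverse (\<pi> ^ j) * (\<Sum>i<n + (j + 1). d i * \<pi> ^ i) = (\<Sum>k\<in>{- int n..int n}. c k * ipow \<pi> k)"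
    proof (intro allI impI)
      fix n assume "j \<le> n"
      show "inverse (\<pi> ^ j) * (\<Sum>i<n + (j + 1). d i * \<pi> ^ i) = (\<Sum>k\<in>{- int n..int n}. c k * ipow \<pi> k)"
        by (rule sym[OF \<open>j \<le> n\<close>, symmetric])
    qed
  qed
  have pe: "pi_expansion absv \<pi> C y c"
    unfolding pi_expansion_def using cC c0 conv_sym by blast
  have "\<exists>l. converges_to absv (\<lambda>N. \<Sum>n\<le>N. c (int n) * \<pi> ^ n) l"
  proof (rule geom_limit)
    fix i
    have "c (int i) \<in> Ov" using cC C_O by blast
    then have "absv (c (int i)) \<le> 1" using O_iff by blast
    then show "absv (c (int i) * \<pi> ^ i) \<le> (1 / real q) ^ i"
      using iq_pos by (simp add: mult_left_le_one_le)
  qed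
  then show ?thesis using pe Qb_def by blast
qed

definition T :: "(int \<Rightarrow> 'a) \<Rightarrow> int \<Rightarrow> 'a" where
  "T c v = (\<Sum>n\<in>{v..<0}. c n * ipow \<pi> n)"

lemma decomp:
  assumes pe: "pi_expansion absv \<pi> C y c"
    and co: "converges_to absv (\<lambda>N. \<Sum>n\<le>N. c (int n) * \<pi> ^ n) z"
    and v: "v \<le> 0" "\<forall>n<v. c n = 0"
  shows "y = T c v + z"
proof -
  have symc: "converges_to absv (\<lambda>N. \<Sum>n\<in>{- int N..int N}. c n * ipow \<pi> n) y"
    using pe unfolding pi_expansion_def by blast
  have eq: "(\<Sum>n\<in>{- int N..int N}. c n * ipow \<pi> n) = T c v + (\<Sum>n\<le>N. c (int n) * \<pi> ^ n)"
    if "N \<ge> nat (- v)" for N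
  proof -
    have "(\<Sum>n\<in>{- int N..int N}. c n * ipow \<pi> n) = (\<Sum>n\<in>{v..int N}. c n * ipow \<pi> n)"
      using that v by (intro sum.mono_neutral_right) auto
    also have "{v..int N} = {v..<0} \<union> {0..int N}" using v by auto
    also have "(\<Sum>n\<in>{v..<0} \<union> {0..int N}. c n * ipow \<pi> n)
        = T c v + (\<Sum>n\<in>{0..int N}. c n * ipow \<pi> n)"
      unfolding T_def by (rule sum.union_disjoint) auto
    also have "{0..int N} = int ` {0..N}" by (simp add: image_int_atLeastAtMost)
    also have "(\<Sum>n\<in>int ` {0..N}. c n * ipow \<pi> n) = (\<Sum>n\<in>{0..N}. c (int n) * \<pi> ^ n)"
      by (subst sum.reindex) auto
    also have "{0..N} = {..N}" by auto
    finally show ?thesis .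
  qed
  have "converges_to absv (\<lambda>N. T c v + (\<Sum>n\<le>N. c (int n) * \<pi> ^ n)) (T c v + z)"
    by (rule conv_add[OF co])
  then have "converges_to absv (\<lambda>N. \<Sum>n\<in>{- int N..int N}. c n * ipow \<pi> n) (T c v + z)"
  proof (rule conv_cong[of _ _ "nat (- v)"])
    show "\<forall>n\<ge>nat (- v). T c v + (\<Sum>n\<le>n. c (int n) * \<pi> ^ n) = (\<Sum>k\<in>{- int n..int n}. c k * ipow \<pi> k)"
    proof (intro allI impI)
      fix n assume h: "nat (- v) \<le> n"
      show "T c v + (\<Sum>n\<le>n. c (int n) * \<pi> ^ n) = (\<Sum>k\<in>{- int n..int n}. c k * ipow \<pi> k)"
        by (rule eq[OF h, symmetric])
    qed
  qed
  then show ?thesis using conv_unique symc by blast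
qed

lemma limit_O:
  assumes pe: "pi_expansion absv \<pi> C y c"
    and co: "converges_to absv (\<lambda>N. \<Sum>n\<le>N. c (int n) * \<pi> ^ n) z"
  shows "z \<in> Ov"
proof -
  obtain N where N: "absv ((\<Sum>n\<le>N. c (int n) * \<pi> ^ n) - z) < 1"
    using co unfolding converges_to_def by (meson zero_less_one order_refl)
  have "absv (\<Sum>n\<le>N. c (int n) * \<pi> ^ n) \<le> 1"
  proof (rule sum_bound)
    fix n assume "n \<in> {..N}"
    have "c (int n) \<in> Ov" using pe C_O unfolding pi_expansion_def by blast
    then show "absv (c (int n) * \<pi> ^ n) \<le> 1" using O_pi[of n] O_mult O_iff by blast
  qed auto
  moreover have "absv (z - (\<Sum>n\<le>N. c (int n) * \<pi> ^ n)) \<le> 1" using N absv_commute by (metis less_imp_le)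
  ultimately have "absv ((\<Sum>n\<le>N. c (int n) * \<pi> ^ n) + (z - (\<Sum>n\<le>N. c (int n) * \<pi> ^ n))) \<le> 1"
    by (rule ultra_le)
  then show ?thesis using O_iff by simp
qed

lemma T_bound: assumes "\<forall>n. c n \<in> C" "\<forall>n. c' n \<in> C"
  shows "absv (T c (- int j) - T c' (- int j)) \<le> real q ^ j"
proof -
  have "T c (- int j) - T c' (- int j) = (\<Sum>n\<in>{- int j..<0}. (c n - c' n) * ipow \<pi> n)"
    unfolding T_def by (simp add: sum_subtractf algebra_simps)
  also have "absv \<dots> \<le> real q ^ j"
  proof (rule sum_bound)
    fix n assume n: "n \<in> {- int j..<0}"
    have "c n - c' n \<in> Ov" using assms C_O O_diff by blast
    then have a: "absv (c n - c' n) \<le> 1" using O_iff by blast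
    have "absv (ipow \<pi> n) = real q ^ nat (- n)" using n absv_ipow_neg by simp
    also have "\<dots> \<le> real q ^ j" using n q1 by (intro power_increasing) auto
    finally have b: "absv (ipow \<pi> n) \<le> real q ^ j" .
    have "absv (c n - c' n) * absv (ipow \<pi> n) \<le> 1 * real q ^ j"
      by (rule mult_mono) (use a b in auto)
    then show "absv ((c n - c' n) * ipow \<pi> n) \<le> real q ^ j" by simp
  qed (use qpos in auto)
  finally show ?thesis .
qed

lemma polar_unique: assumes "\<forall>n. c n \<in> C" "\<forall>n. c' n \<in> C"
  shows "absv (T c (- int j) - T c' (- int j)) \<le> 1 \<Longrightarrow> T c (- int j) = T c' (- int j)"
proof (induction j)
  case 0 then show ?case by (simp add: T_def)
next
  case (Suc j)
  let ?a = "- int (Suc j)"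
  have split: "T d ?a = d ?a * ipow \<pi> ?a + T d (- int j)" for d
  proof -
    have "{?a..<0} = insert ?a {- int j..<0}" by auto
    then show ?thesis unfolding T_def by simp
  qed
  have ia0: "absv (ipow \<pi> ?a) = real q ^ nat (- ?a)" by (rule absv_ipow_neg) simp
  have "nat (- ?a) = Suc j" by (metis nat_int minus_minus)
  then have ia: "absv (ipow \<pi> ?a) = real q ^ Suc j" using ia0 by simp
  let ?A = "(c ?a - c' ?a) * ipow \<pi> ?a" and ?R = "T c (- int j) - T c' (- int j)"
  have diff: "T c ?a - T c' ?a = ?A + ?R" using split[of c] split[of c'] by (simp add: algebra_simps)
  have eq: "c ?a = c' ?a"
  proof (rule ccontr)
    assume ne: "c ?a \<noteq> c' ?a"
    then have "absv ?A = real q ^ Suc j" using C_dist assms ia by simp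
    moreover have "absv ?R \<le> real q ^ j" using T_bound assms by blast
    moreover have "real q ^ j < real q ^ Suc j" using q1 by simp
    ultimately have "absv (?A + ?R) = real q ^ Suc j" using strict by simp
    moreover have "real q ^ Suc j > 1" using q1 by (intro one_less_power) auto
    ultimately show False using Suc.prems diff by simp
  qed
  then have "T c ?a - T c' ?a = ?R" using diff by simp
  then have "?R = 0" using Suc.IH Suc.prems by simp
  then show ?case using diff eq by simp
qed

lemma exp_zeros: assumes "pi_expansion absv \<pi> C y c" shows "\<exists>j::nat. \<forall>n < - int j. c n = 0"
proof -
  obtain v where v: "\<forall>n<v. c n = 0" using assms unfolding pi_expansion_def by blast
  show ?thesis by (rule exI[of _ "nat (- v)"]) (use v in auto)
qed

lemma Qb_key: assumes "Qb y z" "Qb y' z'" "absv (y - y') \<le> 1" shows "z' = z + (y' - y)"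
proof -
  obtain c where c: "pi_expansion absv \<pi> C y c" "converges_to absv (\<lambda>N. \<Sum>n\<le>N. c (int n) * \<pi> ^ n) z"
    using assms(1) Qb_def by blast
  obtain c' where c': "pi_expansion absv \<pi> C y' c'" "converges_to absv (\<lambda>N. \<Sum>n\<le>N. c' (int n) * \<pi> ^ n) z'"
    using assms(2) Qb_def by blast
  obtain j1 where j1: "\<forall>n < - int j1. c n = 0" using exp_zeros[OF c(1)] by blast
  obtain j2 where j2: "\<forall>n < - int j2. c' n = 0" using exp_zeros[OF c'(1)] by blast
  let ?j = "max j1 j2"
  have y: "y = T c (- int ?j) + z" using decomp[OF c] j1 by auto
  have y': "y' = T c' (- int ?j) + z'" using decomp[OF c'] j2 by auto
  have oO: "z \<in> Ov" "z' \<in> Ov" using limit_O c c' by blast+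
  have "T c (- int ?j) - T c' (- int ?j) = (y - y') + (z' - z)" using y y' by (simp add: algebra_simps)
  moreover have "absv (z' - z) \<le> 1" using oO O_diff O_iff by blast
  ultimately have "absv (T c (- int ?j) - T c' (- int ?j)) \<le> 1" using assms(3) ultra_le by simp
  moreover have "\<forall>n. c n \<in> C" "\<forall>n. c' n \<in> C" using c(1) c'(1) unfolding pi_expansion_def by blast+
  ultimately have "T c (- int ?j) = T c' (- int ?j)" using polar_unique by blast
  then show ?thesis using y y' by (simp add: algebra_simps)
qed

abbreviation br :: "'a \<Rightarrow> 'a" where "br \<equiv> bracket absv \<pi> C"

lemma br_Qb: "Qb y (br y)"
proof -
  have "\<exists>!z. Qb y z"
  proof -
    obtain z where "Qb y z" using expansion_exists by blast
    moreover have "z' = z" if "Qb y z'" for z' using Qb_key[OF \<open>Qb y z\<close> that] by simp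
    ultimately show ?thesis by blast
  qed
  then have "Qb y (THE z. Qb y z)" by (rule theI')
  moreover have "br y = (THE z. Qb y z)" unfolding bracket_def Qb_def by simp
  ultimately show ?thesis by simp
qed

lemma br_O: "br y \<in> Ov"
  using br_Qb[of y] limit_O unfolding Qb_def by blast

lemma br_shift: "absv (y - y') \<le> 1 \<Longrightarrow> br y' = br y + (y' - y)"
  using Qb_key[OF br_Qb br_Qb] by blast

end


context nalf
begin

definition cb :: "'a \<Rightarrow> nat \<Rightarrow> 'a set" where
  "cb x k = {y. absv (y - x) \<le> (1 / real q) ^ k}"

lemma pow_le1: "(1 / real q) ^ k \<le> 1"
  using iq_pos iq_less1 by (simp add: power_le_one)

lemma pow_pos: "(1 / real q) ^ k > 0"
  using iq_pos by simp

lemma cb_iff: "y \<in> cb x k \<longleftrightarrow> absv (y - x) \<le> (1 / real q) ^ k"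
  by (simp add: cb_def)

lemma cb_O: assumes "x \<in> Ov" shows "cb x k \<subseteq> Ov"
proof
  fix y assume "y \<in> cb x k"
  then have "absv (y - x) \<le> 1" using pow_le1 cb_iff order_trans by blast
  moreover have "absv x \<le> 1" using assms O_iff by blast
  ultimately have "absv ((y - x) + x) \<le> 1" by (rule ultra_le)
  then show "y \<in> Ov" using O_iff by simp
qed

lemma cb_mem: "x \<in> cb x k" using pow_pos by (simp add: cb_iff less_imp_le)

lemma cb_eq_iff: "cb z l = cb z' l \<longleftrightarrow> absv (z - z') \<le> (1 / real q) ^ l"
proof
  assume "cb z l = cb z' l"
  then show "absv (z - z') \<le> (1 / real q) ^ l" using cb_mem[of z l] cb_iff by blast
next
  assume h: "absv (z - z') \<le> (1 / real q) ^ l"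
  then have h': "absv (z' - z) \<le> (1 / real q) ^ l" using absv_commute by simp
  show "cb z l = cb z' l"
  proof
    show "cb z l \<subseteq> cb z' l"
    proof
      fix y assume "y \<in> cb z l"
      then have "absv ((y - z) + (z - z')) \<le> (1 / real q) ^ l" using h cb_iff ultra_le by blast
      then show "y \<in> cb z' l" by (simp add: cb_iff)
    qed
    show "cb z' l \<subseteq> cb z l"
    proof
      fix y assume "y \<in> cb z' l"
      then have "absv ((y - z') + (z' - z)) \<le> (1 / real q) ^ l" using h' cb_iff ultra_le by blast
      then show "y \<in> cb z l" by (simp add: cb_iff)
    qed
  qed
qed

lemma cb_same: "y \<in> cb x k \<Longrightarrow> cb y k = cb x k"
  using cb_eq_iff cb_iff by blast

lemma cb_disj: "cb x k \<inter> cb y k \<noteq> {} \<Longrightarrow> cb x k = cb y k"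
  using cb_same by blast

lemma cb_sub: assumes "k \<le> l" "y \<in> cb x k" shows "cb y l \<subseteq> cb x k"
proof
  fix z assume "z \<in> cb y l"
  then have "absv (z - y) \<le> (1 / real q) ^ k" using pow_anti[OF assms(1)] cb_iff by force
  moreover have "absv (y - x) \<le> (1 / real q) ^ k" using assms(2) cb_iff by blast
  ultimately have "absv ((z - y) + (y - x)) \<le> (1 / real q) ^ k" by (rule ultra_le)
  then show "z \<in> cb x k" by (simp add: cb_iff)
qed

lemma cb_translate: "(\<lambda>z. z + a) ` cb x k = cb (x + a) k"
proof
  show "(\<lambda>z. z + a) ` cb x k \<subseteq> cb (x + a) k" by (auto simp: cb_iff)
  show "cb (x + a) k \<subseteq> (\<lambda>z. z + a) ` cb x k"
  proof
    fix y assume "y \<in> cb (x + a) k"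
    then have "y - a \<in> cb x k" by (simp add: cb_iff algebra_simps)
    moreover have "y = (y - a) + a" by simp
    ultimately show "y \<in> (\<lambda>z. z + a) ` cb x k" by blast
  qed
qed

lemma cb_open: "absv_open absv (cb x k)"
  unfolding absv_open_def
proof
  fix y assume y: "y \<in> cb x k"
  have "{z. absv (z - y) < (1 / real q) ^ k} \<subseteq> cb x k"
  proof
    fix z assume "z \<in> {z. absv (z - y) < (1 / real q) ^ k}"
    then have "absv (z - y) \<le> (1 / real q) ^ k" by simp
    then have "z \<in> cb y k" by (simp add: cb_iff)
    then show "z \<in> cb x k" using cb_same[OF y] by simp
  qed
  then show "\<exists>r>0. {z. absv (z - y) < r} \<subseteq> cb x k" using pow_pos by blast
qed

lemma cb_0_0: "cb 0 0 = Ov" by (auto simp: cb_iff O_iff)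

primrec DD :: "nat \<Rightarrow> 'a set" where
  "DD 0 = {0}"
| "DD (Suc k) = (\<lambda>(d, c). d + c * \<pi> ^ k) ` (DD k \<times> C)"

lemma DD_finite: "finite (DD k)"
  by (induction k) (auto simp: finC)

lemma DD_approx: assumes "x \<in> Ov" shows "\<exists>d\<in>DD k. absv (x - d) \<le> (1 / real q) ^ k"
proof (induction k)
  case 0 then show ?case using assms O_iff by simp
next
  case (Suc k)
  then obtain d where d: "d \<in> DD k" "absv (x - d) \<le> (1 / real q) ^ k" by blast
  define z where "z = (x - d) / \<pi> ^ k"
  have "absv z = absv (x - d) / (1 / real q) ^ k" by (simp add: z_def)
  also have "\<dots> \<le> 1" using d(2) pow_pos by simp
  finally have zO: "z \<in> Ov" using O_iff by blast
  define c where "c = dig z"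
  have cC: "c \<in> C" using dig(1)[OF zO] c_def by simp
  have "absv (z - c) \<le> 1 / real q" using dig(2)[OF zO] discrete1 c_def by blast
  have "x - (d + c * \<pi> ^ k) = \<pi> ^ k * (z - c)" by (simp add: z_def field_simps)
  then have "absv (x - (d + c * \<pi> ^ k)) = (1 / real q) ^ k * absv (z - c)" by simp
  also have "\<dots> \<le> (1 / real q) ^ k * (1 / real q)"
    using \<open>absv (z - c) \<le> 1 / real q\<close> pow_pos by (intro mult_left_mono) auto
  also have "\<dots> = (1 / real q) ^ Suc k" by simp
  finally have "absv (x - (d + c * \<pi> ^ k)) \<le> (1 / real q) ^ Suc k" .
  moreover have "d + c * \<pi> ^ k \<in> DD (Suc k)" using d(1) cC by force
  ultimately show ?case by blast
qed

lemma BL_sub: assumes "S \<subseteq> Ov" shows "(\<lambda>z. cb z l) ` S \<subseteq> (\<lambda>d. cb d l) ` DD l"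
proof
  fix b assume "b \<in> (\<lambda>z. cb z l) ` S"
  then obtain z where z: "z \<in> S" "b = cb z l" by blast
  then obtain d where d: "d \<in> DD l" "absv (z - d) \<le> (1 / real q) ^ l" using DD_approx assms by blast
  then have "cb z l = cb d l" using cb_eq_iff by blast
  then show "b \<in> (\<lambda>d. cb d l) ` DD l" using z(2) d(1) by (simp add: image_eqI)
qed

lemma BL_finite: "S \<subseteq> Ov \<Longrightarrow> finite ((\<lambda>z. cb z l) ` S)"
  by (rule finite_subset[OF BL_sub finite_imageI[OF DD_finite]])

lemma cb_split: "cb 0 k = (\<Union>c\<in>C. cb (c * \<pi> ^ k) (Suc k))"
proof
  show "cb 0 k \<subseteq> (\<Union>c\<in>C. cb (c * \<pi> ^ k) (Suc k))"
  proof
    fix y assume "y \<in> cb 0 k"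
    then have y: "absv y \<le> (1 / real q) ^ k" by (simp add: cb_iff)
    define z where "z = y / \<pi> ^ k"
    have "absv z = absv y / (1 / real q) ^ k" by (simp add: z_def)
    also have "\<dots> \<le> 1" using y pow_pos by simp
    finally have zO: "z \<in> Ov" using O_iff by blast
    have "absv (z - dig z) \<le> 1 / real q" using dig(2)[OF zO] discrete1 by blast
    have "y - dig z * \<pi> ^ k = \<pi> ^ k * (z - dig z)" by (simp add: z_def field_simps)
    then have "absv (y - dig z * \<pi> ^ k) = (1 / real q) ^ k * absv (z - dig z)" by simp
    also have "\<dots> \<le> (1 / real q) ^ k * (1 / real q)"
      using \<open>absv (z - dig z) \<le> 1 / real q\<close> pow_pos by (intro mult_left_mono) auto
    also have "\<dots> = (1 / real q) ^ Suc k" by simp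
    finally have "y \<in> cb (dig z * \<pi> ^ k) (Suc k)" by (simp add: cb_iff)
    then show "y \<in> (\<Union>c\<in>C. cb (c * \<pi> ^ k) (Suc k))" using dig(1)[OF zO] by blast
  qed
  show "(\<Union>c\<in>C. cb (c * \<pi> ^ k) (Suc k)) \<subseteq> cb 0 k"
  proof
    fix y assume "y \<in> (\<Union>c\<in>C. cb (c * \<pi> ^ k) (Suc k))"
    then obtain c where c: "c \<in> C" "absv (y - c * \<pi> ^ k) \<le> (1 / real q) ^ Suc k" by (auto simp: cb_iff)
    have "absv (y - c * \<pi> ^ k) \<le> (1 / real q) ^ k" using c(2) pow_anti[of k "Suc k"] by simp
    moreover have "absv (c * \<pi> ^ k) \<le> (1 / real q) ^ k"
    proof -
      have "absv c \<le> 1" using c(1) C_O O_iff by blast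
      then show ?thesis using pow_pos by (simp add: mult_left_le_one_le)
    qed
    ultimately have "absv ((y - c * \<pi> ^ k) + c * \<pi> ^ k) \<le> (1 / real q) ^ k" by (rule ultra_le)
    then show "y \<in> cb 0 k" by (simp add: cb_iff)
  qed
qed

lemma cb_split_disj: "disjoint_family_on (\<lambda>c. cb (c * \<pi> ^ k) (Suc k)) C"
  unfolding disjoint_family_on_def
proof (intro ballI impI)
  fix c c' assume cc: "c \<in> C" "c' \<in> C" "c \<noteq> c'"
  show "cb (c * \<pi> ^ k) (Suc k) \<inter> cb (c' * \<pi> ^ k) (Suc k) = {}"
  proof (rule ccontr)
    assume "cb (c * \<pi> ^ k) (Suc k) \<inter> cb (c' * \<pi> ^ k) (Suc k) \<noteq> {}"
    then have "cb (c * \<pi> ^ k) (Suc k) = cb (c' * \<pi> ^ k) (Suc k)" by (rule cb_disj)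
    then have "absv (c * \<pi> ^ k - c' * \<pi> ^ k) \<le> (1 / real q) ^ Suc k" using cb_eq_iff by blast
    moreover have "c * \<pi> ^ k - c' * \<pi> ^ k = (c - c') * \<pi> ^ k" by (simp add: algebra_simps)
    ultimately have "(1 / real q) ^ k \<le> (1 / real q) ^ Suc k" using C_dist[OF cc] by simp
    moreover have "(1 / real q) ^ Suc k < (1 / real q) ^ k"
    proof -
      have "(1 / real q) ^ Suc k = (1 / real q) ^ k * (1 / real q)" by (simp only: power_Suc2)
      also have "\<dots> < (1 / real q) ^ k * 1" by (rule mult_strict_left_mono[OF iq_less1 pow_pos])
      finally show ?thesis by simp
    qed
    ultimately show False by simp
  qed
qed

end

locale haar = nalf +
  fixes M :: "'a measure"
  assumes haar: "normalized_haar absv M"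
begin

lemma space_M: "space M = Ov" using haar unfolding normalized_haar_def by blast
lemma sets_M: "sets M = borel_O absv" using haar unfolding normalized_haar_def by blast
lemma em_O: "emeasure M Ov = 1" using haar unfolding normalized_haar_def by blast
lemma transl: "a \<in> Ov \<Longrightarrow> B \<in> sets M \<Longrightarrow> emeasure M ((\<lambda>x. x + a) ` B) = emeasure M B"
  using haar unfolding normalized_haar_def by blast

lemma fm: "finite_measure M"
  by (rule finite_measureI) (simp add: space_M em_O)

lemma meas_O: "measure M Ov = 1" using em_O by (simp add: measure_def)

lemma open_sets: "absv_open absv U \<Longrightarrow> U \<subseteq> Ov \<Longrightarrow> U \<in> sets M"
proof -
  assume "absv_open absv U" "U \<subseteq> Ov"
  then have "U \<in> {U \<inter> valring absv | U. absv_open absv U}" by blast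
  then show "U \<in> sets M" unfolding sets_M borel_O_def by blast
qed

lemma cb_sets: "x \<in> Ov \<Longrightarrow> cb x k \<in> sets M"
  using open_sets cb_open cb_O by blast

lemma meas_transl: assumes "a \<in> Ov" "x \<in> Ov" shows "measure M (cb (x + a) k) = measure M (cb x k)"
proof -
  have "emeasure M (cb (x + a) k) = emeasure M (cb x k)"
    using transl[OF assms(1) cb_sets[OF assms(2)]] cb_translate by simp
  then show ?thesis by (simp add: measure_def)
qed

lemma meas_cb0: "measure M (cb 0 k) = (1 / real q) ^ k"
proof (induction k)
  case 0 then show ?case using cb_0_0 meas_O by simp
next
  case (Suc k)
  have cO: "c * \<pi> ^ k \<in> Ov" if "c \<in> C" for c using that C_O O_mult O_pi by blast
  have "measure M (cb 0 k) = (\<Sum>c\<in>C. measure M (cb (c * \<pi> ^ k) (Suc k)))"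
    unfolding cb_split[of k]
    by (rule finite_measure.finite_measure_finite_Union[OF fm finC _ cb_split_disj]) (use cb_sets cO in blast)
  also have "\<dots> = (\<Sum>c\<in>C. measure M (cb 0 (Suc k)))"
    by (intro sum.cong refl) (use meas_transl[OF cO O_0] in simp)
  also have "\<dots> = real q * measure M (cb 0 (Suc k))" using cardC by simp
  finally have "real q * measure M (cb 0 (Suc k)) = (1 / real q) ^ k" using Suc by simp
  then show ?case using qpos by (simp add: field_simps)
qed

lemma meas_cb: "x \<in> Ov \<Longrightarrow> measure M (cb x k) = (1 / real q) ^ k"
  using meas_transl[of x 0 k] O_0 meas_cb0 by simp

lemma partition_meas:
  assumes S: "S \<subseteq> Ov" "\<And>z. z \<in> S \<Longrightarrow> cb z l \<subseteq> S"
  shows "measure M S = real (card ((\<lambda>z. cb z l) ` S)) * (1 / real q) ^ l"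
proof -
  let ?I = "(\<lambda>z. cb z l) ` S"
  have SU: "S = (\<Union>b\<in>?I. id b)" using S cb_mem by auto
  have "measure M (\<Union>b\<in>?I. id b) = (\<Sum>b\<in>?I. measure M (id b))"
  proof (rule finite_measure.finite_measure_finite_Union[OF fm])
    show "finite ?I" using BL_finite S(1) by blast
    show "id ` ?I \<subseteq> sets M" using cb_sets S(1) by auto
    show "disjoint_family_on id ?I" unfolding disjoint_family_on_def using cb_disj by auto
  qed
  also have "\<dots> = (\<Sum>b\<in>?I. (1 / real q) ^ l)"
    by (intro sum.cong refl) (use meas_cb S(1) in auto)
  also have "\<dots> = real (card ?I) * (1 / real q) ^ l" by simp
  finally show ?thesis using SU by simp
qed

lemma card_BL: assumes "a \<in> Ov" "j \<le> l"
  shows "card ((\<lambda>z. cb z l) ` cb a j) = q ^ (l - j)"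
proof -
  have "measure M (cb a j) = real (card ((\<lambda>z. cb z l) ` cb a j)) * (1 / real q) ^ l"
    by (rule partition_meas) (use cb_O[OF assms(1)] cb_sub[OF assms(2)] in auto)
  moreover have "measure M (cb a j) = (1 / real q) ^ j" using meas_cb assms by blast
  moreover have "(1 / real q) ^ j = real q ^ (l - j) * (1 / real q) ^ l"
  proof -
    have "(1 / real q) ^ l = (1 / real q) ^ j * (1 / real q) ^ (l - j)"
      using assms(2) by (simp add: power_add[symmetric])
    moreover have "real q ^ (l - j) * (1 / real q) ^ (l - j) = 1"
      using qpos by (simp add: power_one_over[symmetric] power_mult_distrib[symmetric])
    ultimately show ?thesis by (simp add: algebra_simps)
  qed
  ultimately have "real (card ((\<lambda>z. cb z l) ` cb a j)) = real q ^ (l - j)"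
    using pow_pos by (metis mult_right_cancel less_irrefl)
  then show ?thesis by (metis of_nat_eq_iff of_nat_power)
qed

end


lemma card_eq_rel:
  assumes "\<forall>z\<in>Q. \<forall>z'\<in>Q. (h1 z = h1 z') = (h2 z = h2 z')"
  shows "card (h1 ` Q) = card (h2 ` Q)"
proof (rule bij_betw_same_card)
  let ?g = "\<lambda>b. h2 (inv_into Q h1 b)"
  have i1: "inv_into Q h1 b \<in> Q" if "b \<in> h1 ` Q" for b using that by (rule inv_into_into)
  have i2: "h1 (inv_into Q h1 b) = b" if "b \<in> h1 ` Q" for b using that by (rule f_inv_into_f)
  show "bij_betw ?g (h1 ` Q) (h2 ` Q)"
    unfolding bij_betw_def
  proof
    show "inj_on ?g (h1 ` Q)"
    proof (rule inj_onI)
      fix b b' assume b: "b \<in> h1 ` Q" "b' \<in> h1 ` Q" "?g b = ?g b'"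
      then have "h1 (inv_into Q h1 b) = h1 (inv_into Q h1 b')" using assms i1 by blast
      then show "b = b'" using i2 b by simp
    qed
    show "?g ` h1 ` Q = h2 ` Q"
    proof
      show "?g ` h1 ` Q \<subseteq> h2 ` Q" using i1 by blast
      show "h2 ` Q \<subseteq> ?g ` h1 ` Q"
      proof
        fix y assume "y \<in> h2 ` Q"
        then obtain z where z: "z \<in> Q" "y = h2 z" by blast
        have "h1 (inv_into Q h1 (h1 z)) = h1 z" using i2 z by blast
        then have "h2 (inv_into Q h1 (h1 z)) = h2 z" using assms i1 z by blast
        moreover have "h1 z \<in> h1 ` Q" using z(1) by blast
        ultimately show "y \<in> ?g ` h1 ` Q" using z(2) by (metis image_eqI)
      qed
    qed
  qed
qed

locale haar_f = haar +
  fixes f :: "'a \<Rightarrow> 'a" and lam :: real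
  assumes lam: "lam \<ge> 0" and scal: "scaling_map absv q lam Ov f"
begin

lemma scal': "x \<in> Ov \<Longrightarrow> y \<in> Ov \<Longrightarrow> absv (f x - f y) = real q powr lam * absv (x - y)"
  using scal unfolding scaling_map_def by blast

lemma exists_m: "\<exists>m::nat. real q powr lam = real q ^ m"
proof -
  have piO: "\<pi> \<in> Ov" using O_pi[of 1] by simp
  have e: "absv (f \<pi> - f 0) = real q powr lam * (1 / real q)" using scal'[OF piO O_0] by simp
  then have "absv (f \<pi> - f 0) > 0" using qpos by simp
  then have "f \<pi> - f 0 \<noteq> 0" by auto
  then obtain n :: int where n: "absv (f \<pi> - f 0) = real q powr n" using valgrp by blast
  have "real q powr lam = real q powr n * real q" using e n qpos by (simp add: field_simps)
  also have "\<dots> = real q powr (real_of_int n + 1)" using qpos by (simp add: powr_add)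
  finally have "lam = real_of_int n + 1" using q1 powr_inj[of "real q" lam "real_of_int n + 1"] by simp
  then have "lam = real (nat (n + 1))" using lam by simp
  then have "real q powr lam = real q ^ nat (n + 1)" using qpos by (simp add: powr_realpow)
  then show ?thesis by blast
qed

definition m :: nat where "m = (SOME m. real q powr lam = real q ^ m)"

lemma m: "real q powr lam = real q ^ m"
  unfolding m_def using exists_m by (rule someI_ex)

definition G :: "'a \<Rightarrow> 'a" where "G z = br (f z)"

lemma G_O: "G z \<in> Ov" unfolding G_def by (rule br_O)

lemma qm: "real q ^ m * (1 / real q) ^ m = 1"
  using qpos by (simp add: power_one_over[symmetric] power_mult_distrib[symmetric])

lemma G_scal: assumes "z \<in> Ov" "w \<in> Ov" "absv (z - w) \<le> (1 / real q) ^ m"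
  shows "absv (G z - G w) = real q ^ m * absv (z - w)"
proof -
  have fz: "absv (f z - f w) = real q ^ m * absv (z - w)" using scal'[OF assms(1,2)] m by simp
  also have "\<dots> \<le> real q ^ m * (1 / real q) ^ m" using assms(3) qpos by (intro mult_left_mono) auto
  also have "\<dots> = 1" by (rule qm)
  finally have "br (f w) = br (f z) + (f w - f z)" by (rule br_shift)
  then have "G z - G w = f z - f w" unfolding G_def by simp
  then show ?thesis using fz by simp
qed

lemma G_iff: assumes "z \<in> Ov" "w \<in> Ov" "absv (z - w) \<le> (1 / real q) ^ m"
  shows "absv (z - w) \<le> (1 / real q) ^ (k + m) \<longleftrightarrow> absv (G z - G w) \<le> (1 / real q) ^ k"
proof -
  have "(1 / real q) ^ (k + m) = (1 / real q) ^ k * (1 / real q) ^ m" by (simp add: power_add)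
  have "absv (z - w) \<le> (1 / real q) ^ (k + m) \<longleftrightarrow> real q ^ m * absv (z - w) \<le> real q ^ m * (1 / real q) ^ (k + m)"
    using qpos by simp
  also have "real q ^ m * (1 / real q) ^ (k + m) = (1 / real q) ^ k"
    using qm by (simp add: power_add algebra_simps)
  finally show ?thesis using G_scal[OF assms] by simp
qed

lemma same_ball: assumes "z \<in> cb a m" "w \<in> cb a m" shows "absv (z - w) \<le> (1 / real q) ^ m"
proof -
  have "absv ((z - a) + (a - w)) \<le> (1 / real q) ^ m"
    using assms absv_commute[of w a] by (intro ultra_le) (auto simp: cb_iff)
  then show ?thesis by simp
qed

lemma surj: assumes "a \<in> Ov" "x \<in> Ov" shows "\<exists>z\<in>cb a m. absv (G z - x) \<le> (1 / real q) ^ k"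
proof -
  let ?Q = "cb a m"
  have QO: "?Q \<subseteq> Ov" using cb_O[OF assms(1)] .
  let ?A = "(\<lambda>z. cb z (k + m)) ` ?Q"
  let ?B = "(\<lambda>z. cb (G z) k) ` ?Q"
  let ?L = "(\<lambda>z. cb z k) ` Ov"
  have cA: "card ?A = q ^ k" using card_BL[OF assms(1), of m "k + m"] by simp
  have cL: "card ?L = q ^ k" using card_BL[OF O_0, of 0 k] cb_0_0 by simp
  have "card ?A = card ?B"
  proof (rule card_eq_rel, intro ballI)
    fix z z' assume zz: "z \<in> ?Q" "z' \<in> ?Q"
    have "(cb z (k + m) = cb z' (k + m)) = (absv (z - z') \<le> (1 / real q) ^ (k + m))" by (rule cb_eq_iff)
    also have "\<dots> = (absv (G z - G z') \<le> (1 / real q) ^ k)"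
      using G_iff zz QO same_ball by blast
    also have "\<dots> = (cb (G z) k = cb (G z') k)" by (rule cb_eq_iff[symmetric])
    finally show "(cb z (k + m) = cb z' (k + m)) = (cb (G z) k = cb (G z') k)" .
  qed
  then have cB: "card ?B = card ?L" using cA cL by simp
  have BL: "?B \<subseteq> ?L" using G_O by blast
  have "?B = ?L" by (rule card_subset_eq[OF BL_finite[OF order_refl] BL cB])
  moreover have "cb x k \<in> ?L" using assms(2) by blast
  ultimately have "cb x k \<in> ?B" by simp
  then obtain z where z: "z \<in> ?Q" "cb x k = cb (G z) k" by (rule imageE)
  then show ?thesis using cb_eq_iff absv_commute by metis
qed

definition S :: "'a \<Rightarrow> nat \<Rightarrow> 'a set" where "S x k = {z \<in> Ov. G z \<in> cb x k}"

lemma S_balls: assumes "x \<in> Ov" "z \<in> S x k" shows "cb z (k + m) \<subseteq> S x k"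
proof
  fix w assume w: "w \<in> cb z (k + m)"
  have zO: "z \<in> Ov" using assms S_def by blast
  have wO: "w \<in> Ov" using w cb_O[OF zO] by blast
  have "absv (w - z) \<le> (1 / real q) ^ (k + m)" using w cb_iff by blast
  moreover then have "absv (w - z) \<le> (1 / real q) ^ m" using pow_anti[of m "k + m"] by simp
  ultimately have "absv (G w - G z) \<le> (1 / real q) ^ k" using G_iff[OF wO zO] by blast
  moreover have "absv (G z - x) \<le> (1 / real q) ^ k" using assms S_def cb_iff by blast
  ultimately have "absv ((G w - G z) + (G z - x)) \<le> (1 / real q) ^ k" by (rule ultra_le)
  then show "w \<in> S x k" using wO by (simp add: S_def cb_iff)
qed

lemma S_sets: assumes "x \<in> Ov" shows "S x k \<in> sets M"
proof (rule open_sets)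
  show "S x k \<subseteq> Ov" unfolding S_def by blast
  show "absv_open absv (S x k)"
    unfolding absv_open_def
  proof
    fix z assume z: "z \<in> S x k"
    have "{y. absv (y - z) < (1 / real q) ^ (k + m)} \<subseteq> cb z (k + m)" by (auto simp: cb_iff)
    then show "\<exists>r>0. {y. absv (y - z) < r} \<subseteq> S x k" using S_balls[OF assms z] pow_pos by blast
  qed
qed

lemma S_meas: assumes "x \<in> Ov" shows "measure M (S x k) = (1 / real q) ^ k"
proof -
  let ?I = "(\<lambda>z. cb z m) ` Ov"
  have fin: "finite ?I" using BL_finite by blast
  have cI: "card ?I = q ^ m" using card_BL[OF O_0, of 0 m] cb_0_0 by simp
  have SU: "S x k = (\<Union>b\<in>?I. S x k \<inter> b)" using cb_mem unfolding S_def by blast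
  have piece: "measure M (S x k \<inter> b) = (1 / real q) ^ (k + m)" if "b \<in> ?I" for b
  proof -
    obtain a where a: "a \<in> Ov" "b = cb a m" using \<open>b \<in> ?I\<close> by blast
    obtain z0 where z0: "z0 \<in> cb a m" "absv (G z0 - x) \<le> (1 / real q) ^ k" using surj[OF a(1) assms] by blast
    have z0O: "z0 \<in> Ov" using z0(1) cb_O[OF a(1)] by blast
    have z0S: "z0 \<in> S x k" using z0 z0O by (simp add: S_def cb_iff)
    have "S x k \<inter> b = cb z0 (k + m)"
    proof
      show "cb z0 (k + m) \<subseteq> S x k \<inter> b"
        using S_balls[OF assms z0S] cb_sub[of m "k + m" z0 a] z0(1) a(2) by auto
      show "S x k \<inter> b \<subseteq> cb z0 (k + m)"
      proof
        fix w assume w: "w \<in> S x k \<inter> b"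
        then have wO: "w \<in> Ov" unfolding S_def by blast
        have d: "absv (w - z0) \<le> (1 / real q) ^ m" using same_ball w z0(1) a(2) by blast
        have "absv (G w - x) \<le> (1 / real q) ^ k" using w S_def cb_iff by blast
        then have "absv ((G w - x) - (G z0 - x)) \<le> (1 / real q) ^ k" using z0(2) by (rule ultra_le_diff)
        then have "absv (G w - G z0) \<le> (1 / real q) ^ k" by simp
        then have "absv (w - z0) \<le> (1 / real q) ^ (k + m)" using G_iff[OF wO z0O d] by blast
        then show "w \<in> cb z0 (k + m)" by (simp add: cb_iff)
      qed
    qed
    then show ?thesis using meas_cb[OF z0O] by simp
  qed
  have "measure M (\<Union>b\<in>?I. S x k \<inter> b) = (\<Sum>b\<in>?I. measure M (S x k \<inter> b))"
  proof (rule finite_measure.finite_measure_finite_Union[OF fm fin])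
    show "(\<lambda>b. S x k \<inter> b) ` ?I \<subseteq> sets M" using S_sets[OF assms] cb_sets by blast
    show "disjoint_family_on (\<lambda>b. S x k \<inter> b) ?I"
      unfolding disjoint_family_on_def using cb_disj by blast
  qed
  also have "\<dots> = (\<Sum>b\<in>?I. (1 / real q) ^ (k + m))" by (intro sum.cong refl) (use piece in blast)
  also have "\<dots> = real q ^ m * (1 / real q) ^ (k + m)" using cI by simp
  also have "\<dots> = (1 / real q) ^ k" using qm by (simp add: power_add algebra_simps)
  finally show ?thesis using SU by simp
qed

end


context haar
begin

definition EE :: "'a set set" where "EE = {cb x k | x k. x \<in> Ov} \<union> {{}}"

lemma EE_Pow: "EE \<subseteq> Pow Ov" unfolding EE_def using cb_O by blast

lemma EE_sets: "EE \<subseteq> sets M" unfolding EE_def using cb_sets by auto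

lemma EE_Int: "Int_stable EE"
  unfolding Int_stable_def
proof (intro ballI)
  fix a b assume ab: "a \<in> EE" "b \<in> EE"
  show "a \<inter> b \<in> EE"
  proof (cases "a \<inter> b = {}")
    case True then show ?thesis unfolding EE_def by simp
  next
    case False
    then obtain x k y l where a: "a = cb x k" "x \<in> Ov" and b: "b = cb y l" "y \<in> Ov"
      using ab unfolding EE_def by blast
    obtain w where w: "w \<in> cb x k" "w \<in> cb y l" using False a b by blast
    show ?thesis
    proof (cases "k \<le> l")
      case True
      have "cb y l = cb w l" using cb_same[OF w(2)] by simp
      also have "\<dots> \<subseteq> cb x k" by (rule cb_sub[OF True w(1)])
      finally have "a \<inter> b = cb y l" using a b by blast
      then show ?thesis unfolding EE_def using b(2) by blast
    next
      case False
      then have le: "l \<le> k" by simp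
      have "cb x k = cb w k" using cb_same[OF w(1)] by simp
      also have "\<dots> \<subseteq> cb y l" by (rule cb_sub[OF le w(2)])
      finally have "a \<inter> b = cb x k" using a b by blast
      then show ?thesis unfolding EE_def using a(2) by blast
    qed
  qed
qed

lemma sets_EE: "sets M = sigma_sets Ov EE"
proof
  show "sigma_sets Ov EE \<subseteq> sets M"
    using sets.sigma_sets_subset[OF EE_sets] space_M by simp
  have "{U \<inter> Ov | U. absv_open absv U} \<subseteq> sigma_sets Ov EE"
  proof
    fix V assume "V \<in> {U \<inter> Ov | U. absv_open absv U}"
    then obtain U where U: "V = U \<inter> Ov" "absv_open absv U" by blast
    let ?Cnt = "\<Union>k. (\<lambda>z. cb z k) ` Ov"
    let ?F = "{b \<in> ?Cnt. b \<subseteq> V}"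
    have cU: "countable (UNIV :: nat set)" by simp
    have cnt: "countable ?Cnt"
      by (intro countable_UN[OF cU] countable_finite BL_finite) simp
    have "V = \<Union>?F"
    proof
      show "\<Union>?F \<subseteq> V" by blast
      show "V \<subseteq> \<Union>?F"
      proof
        fix z assume z: "z \<in> V"
        then obtain r where r: "r > 0" "{y. absv (y - z) < r} \<subseteq> U" using U unfolding absv_open_def by blast
        obtain k where k: "(1 / real q) ^ Suc k < r" using small_pow[OF r(1)] by (metis pow_anti Suc_leD le_refl not_less_eq_eq order_le_less_trans)
        have zO: "z \<in> Ov" using z U by blast
        have "cb z (Suc k) \<subseteq> {y. absv (y - z) < r}" using k by (auto simp: cb_iff)
        then have "cb z (Suc k) \<subseteq> V" using r cb_O[OF zO] U by blast
        moreover have "cb z (Suc k) \<in> ?Cnt" using zO by blast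
        ultimately show "z \<in> \<Union>?F" using cb_mem by blast
      qed
    qed
    moreover have "\<Union>?F \<in> sigma_sets Ov EE"
    proof (rule sigma_sets_UNION)
      show "countable ?F" by (rule countable_subset[OF _ cnt]) blast
      fix b assume "b \<in> ?F"
      then have "b \<in> EE" unfolding EE_def by blast
      then show "b \<in> sigma_sets Ov EE" by (rule sigma_sets.Basic)
    qed
    ultimately show "V \<in> sigma_sets Ov EE" by simp
  qed
  then have "sigma_sets Ov {U \<inter> Ov | U. absv_open absv U} \<subseteq> sigma_sets Ov EE"
    by (rule sigma_sets_mono)
  then show "sets M \<subseteq> sigma_sets Ov EE" unfolding sets_M borel_O_def by simp
qed

end

context haar_f
begin

lemma G_meas: "G \<in> measurable M M"
proof (rule measurable_sigma_sets[OF sets_EE EE_Pow])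
  show "G \<in> space M \<rightarrow> Ov" using G_O by blast
  fix y assume "y \<in> EE"
  then consider "y = {}" | x k where "y = cb x k" "x \<in> Ov" unfolding EE_def by blast
  then show "G -` y \<inter> space M \<in> sets M"
  proof cases
    case 1 then show ?thesis by simp
  next
    case 2
    have "G -` y \<inter> space M = S x k" using 2 space_M unfolding S_def by blast
    then show ?thesis using S_sets[OF 2(2)] by simp
  qed
qed

lemma distr_eq: "distr M M G = M"
proof (rule measure_eqI_generator_eq[OF EE_Int EE_Pow _ _ sets_EE, where A="\<lambda>_. Ov"])
  show "sets (distr M M G) = sigma_sets Ov EE" using sets_EE by simp
  show "range (\<lambda>_. Ov) \<subseteq> EE" unfolding EE_def using cb_0_0 O_0 by blast
  show "(\<Union>i. Ov) = Ov" by simp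
  show "emeasure (distr M M G) Ov \<noteq> \<infinity>" for i :: nat
    using emeasure_distr[OF G_meas, of Ov] space_M sets.top[of M] finite_measure.emeasure_finite[OF fm] by simp
  fix X assume X: "X \<in> EE"
  then consider "X = {}" | x k where "X = cb x k" "x \<in> Ov" unfolding EE_def by blast
  then show "emeasure (distr M M G) X = emeasure M X"
  proof cases
    case 1 then show ?thesis by simp
  next
    case 2
    have "emeasure (distr M M G) X = emeasure M (G -` X \<inter> space M)"
      using emeasure_distr[OF G_meas] X EE_sets by blast
    also have "G -` X \<inter> space M = S x k" using 2 space_M unfolding S_def by blast
    also have "emeasure M (S x k) = ennreal (measure M (S x k))"
      by (rule finite_measure.emeasure_eq_measure[OF fm])
    also have "\<dots> = ennreal (measure M (cb x k))" using S_meas[OF 2(2)] meas_cb[OF 2(2)] by simp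
    also have "\<dots> = emeasure M X" using finite_measure.emeasure_eq_measure[OF fm] 2 by simp
    finally show ?thesis .
  qed
qed

lemma main:
  assumes "B \<in> sets M"
  shows "(\<lambda>x. bracket absv \<pi> C (f x)) -` B \<inter> valring absv \<in> sets M \<and>
         emeasure M ((\<lambda>x. bracket absv \<pi> C (f x)) -` B \<inter> valring absv) = emeasure M B"
proof -
  have Geq: "(\<lambda>x. bracket absv \<pi> C (f x)) = G" unfolding G_def by (rule ext) simp
  have "G -` B \<inter> space M \<in> sets M" using measurable_sets[OF G_meas assms] .
  moreover have "emeasure M (G -` B \<inter> space M) = emeasure M B"
    using emeasure_distr[OF G_meas assms] distr_eq by simp
  ultimately show ?thesis using Geq space_M by simp
qed

end

theorem lemma3p1:
  fixes absv :: "'a::field \<Rightarrow> real" and \<pi> :: 'a and q :: nat and C :: "'a set"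
    and f :: "'a \<Rightarrow> 'a" and lam :: real and M :: "'a measure" and B :: "'a set"
  assumes "nonarch_local_field absv \<pi> q C"
    and "normalized_haar absv M"
    and "lam \<ge> 0"
    and "scaling_map absv q lam (valring absv) f"
    and "B \<in> sets M"
  shows "(\<lambda>x. bracket absv \<pi> C (f x)) -` B \<inter> valring absv \<in> sets M \<and>
         emeasure M ((\<lambda>x. bracket absv \<pi> C (f x)) -` B \<inter> valring absv) = emeasure M B"
proof -
  interpret haar_f absv \<pi> q C M f lam
    by (unfold_locales) (use assms in auto)
  show ?thesis by (rule main[OF assms(5)])
qed


end
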